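(* Let $\mathcal{M}$ be an ergodic (not necessarily reversible) Markov chain on a finite state space, with continuization $\widetilde{\mathcal{M}}$. Then $$\lambda_1(\mathcal{M})\ \ge\ \frac{(\frac12-\frac{1}{2e})^2}{8\,\tau(\mathcal{M},\frac{1}{2e})^2}\qquad\text{and}\qquad \lambda_1(\mathcal{M})\ \ge\ \frac{(\frac12-\frac{1}{2e})^2}{8\,\tau(\widetilde{\mathcal{M}},\frac{1}{2e})^2}.$$
   Context: A (discrete-time) Markov chain on a finite state space $\Omega$ with transition matrix $P$ is ergodic if irreducible and aperiodic; it then has a unique stationary distribution $\pi>0$. Variation distance: $\|\theta_1-\theta_2\|=\frac12\sum_i|\theta_1(i)-\theta_2(i)|$. Discrete mixing time: $\tau_x(\mathcal{M},\varepsilon)=\min\{t>0 \text{ integer}: \|P^{t'}(x,\cdot)-\pi\|\le\varepsilon \ \forall t'\ge t\}$, $\tau(\mathcal{M},\varepsilon)=\max_x\tau_x(\mathcal{M},\varepsilon)$. Continuization: with $Q=P-I$, $\widetilde{\mathcal{M}}$ has time-$t$ transition matrix $\exp(Qt)$; $\tau_x(\widetilde{\mathcal{M}},\varepsilon)=\inf\{t>0: \|v_x\exp(Qt')-\pi\|\le\varepsilon \ \forall \text{ real } t'\ge t\}$ ($v_x$ the unit row vector at $x$), $\tau(\widetilde{\mathcal{M}},\varepsilon)=\max_x\tau_x(\widetilde{\mathcal{M}},\varepsilon)$. Dirichlet form $\mathcal{E}_{\mathcal{M}}(\varphi,\varphi)=\frac12\sum_{x,y}\pi(x)P(x,y)(\varphi(x)-\varphi(y))^2$;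 $\lambda_1(\mathcal{M})=\inf_\varphi\mathcal{E}_{\mathcal{M}}(\varphi,\varphi)/\operatorname{var}_\pi\varphi$ over non-constant $\varphi:\Omega\to\mathbb{R}$. *)

theory Defs
  imports "HOL-Analysis.Analysis" "HOL-Library.Extended_Real"
begin

definition stochastic :: "('a::finite \<Rightarrow> 'a \<Rightarrow> real) \<Rightarrow> bool" where
  "stochastic P \<longleftrightarrow> (\<forall>x y. 0 \<le> P x y) \<and> (\<forall>x. (\<Sum>y\<in>UNIV. P x y) = 1)"

definition mat_mult :: "('a::finite \<Rightarrow> 'a \<Rightarrow> real) \<Rightarrow> ('a \<Rightarrow> 'a \<Rightarrow> real) \<Rightarrow> ('a \<Rightarrow> 'a \<Rightarrow> real)" where
  "mat_mult A B = (\<lambda>x z. \<Sum>y\<in>UNIV. A x y * B y z)"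

definition mat_id :: "'a \<Rightarrow> 'a \<Rightarrow> real" where
  "mat_id = (\<lambda>x y. if x = y then 1 else 0)"

fun mat_pow :: "('a::finite \<Rightarrow> 'a \<Rightarrow> real) \<Rightarrow> nat \<Rightarrow> ('a \<Rightarrow> 'a \<Rightarrow> real)" where
  "mat_pow A 0 = mat_id"
| "mat_pow A (Suc n) = mat_mult (mat_pow A n) A"

definition irreducible_chain :: "('a::finite \<Rightarrow> 'a \<Rightarrow> real) \<Rightarrow> bool" where
  "irreducible_chain P \<longleftrightarrow> (\<forall>x y. \<exists>n. mat_pow P n x y > 0)"

definition period :: "('a::finite \<Rightarrow> 'a \<Rightarrow> real) \<Rightarrow> 'a \<Rightarrow> nat" where
  "period P x = Gcd {n. n > 0 \<and> mat_pow P n x x > 0}"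

definition aperiodic_chain :: "('a::finite \<Rightarrow> 'a \<Rightarrow> real) \<Rightarrow> bool" where
  "aperiodic_chain P \<longleftrightarrow> (\<forall>x. period P x = 1)"

definition ergodic :: "('a::finite \<Rightarrow> 'a \<Rightarrow> real) \<Rightarrow> bool" where
  "ergodic P \<longleftrightarrow> stochastic P \<and> irreducible_chain P \<and> aperiodic_chain P"

definition stationary :: "('a::finite \<Rightarrow> 'a \<Rightarrow> real) \<Rightarrow> ('a \<Rightarrow> real) \<Rightarrow> bool" where
  "stationary P \<pi> \<longleftrightarrow> (\<forall>x. 0 \<le> \<pi> x) \<and> (\<Sum>x\<in>UNIV. \<pi> x) = 1 \<and>
     (\<forall>y. (\<Sum>x\<in>UNIV. \<pi> x * P x y) = \<pi> y)"

definition var_dist :: "('a::finite \<Rightarrow> real) \<Rightarrow> ('a \<Rightarrow> real) \<Rightarrow> real" where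
  "var_dist \<theta>1 \<theta>2 = (1/2) * (\<Sum>i\<in>UNIV. \<bar>\<theta>1 i - \<theta>2 i\<bar>)"

definition mix_time_from :: "('a::finite \<Rightarrow> 'a \<Rightarrow> real) \<Rightarrow> ('a \<Rightarrow> real) \<Rightarrow> real \<Rightarrow> 'a \<Rightarrow> nat" where
  "mix_time_from P \<pi> \<epsilon> x =
     (LEAST t. t > 0 \<and> (\<forall>t'\<ge>t. var_dist (mat_pow P t' x) \<pi> \<le> \<epsilon>))"

definition mix_time :: "('a::finite \<Rightarrow> 'a \<Rightarrow> real) \<Rightarrow> ('a \<Rightarrow> real) \<Rightarrow> real \<Rightarrow> nat" where
  "mix_time P \<pi> \<epsilon> = Max (range (mix_time_from P \<pi> \<epsilon>))"

text \<open>Continuization: Q = P - I, time-t kernel exp(Q t) = sum_k (t^k/k!) Q^k.\<close>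
definition gen_matrix :: "('a::finite \<Rightarrow> 'a \<Rightarrow> real) \<Rightarrow> ('a \<Rightarrow> 'a \<Rightarrow> real)" where
  "gen_matrix P = (\<lambda>x y. P x y - mat_id x y)"

definition exp_gen :: "('a::finite \<Rightarrow> 'a \<Rightarrow> real) \<Rightarrow> real \<Rightarrow> ('a \<Rightarrow> 'a \<Rightarrow> real)" where
  "exp_gen P t = (\<lambda>x y. \<Sum>k. (t ^ k / fact k) * mat_pow (gen_matrix P) k x y)"

definition cmix_time_from :: "('a::finite \<Rightarrow> 'a \<Rightarrow> real) \<Rightarrow> ('a \<Rightarrow> real) \<Rightarrow> real \<Rightarrow> 'a \<Rightarrow> real" where
  "cmix_time_from P \<pi> \<epsilon> x =
     Inf {t. t > 0 \<and> (\<forall>t'::real. t' \<ge> t \<longrightarrow> var_dist (exp_gen P t' x) \<pi> \<le> \<epsilon>)}"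

definition cmix_time :: "('a::finite \<Rightarrow> 'a \<Rightarrow> real) \<Rightarrow> ('a \<Rightarrow> real) \<Rightarrow> real \<Rightarrow> real" where
  "cmix_time P \<pi> \<epsilon> = Max (range (cmix_time_from P \<pi> \<epsilon>))"

definition dirichlet :: "('a::finite \<Rightarrow> 'a \<Rightarrow> real) \<Rightarrow> ('a \<Rightarrow> real) \<Rightarrow> ('a \<Rightarrow> real) \<Rightarrow> real" where
  "dirichlet P \<pi> \<phi> = (1/2) * (\<Sum>x\<in>UNIV. \<Sum>y\<in>UNIV. \<pi> x * P x y * (\<phi> x - \<phi> y)^2)"

definition var_pi :: "('a::finite \<Rightarrow> real) \<Rightarrow> ('a \<Rightarrow> real) \<Rightarrow> real" where
  "var_pi \<pi> \<phi> = (\<Sum>x\<in>UNIV. \<pi> x * (\<phi> x - (\<Sum>y\<in>UNIV. \<pi> y * \<phi> y))^2)"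

text \<open>Spectral gap, as an extended real (infimum over the empty set is +infinity,
  which happens only for a one-point state space).\<close>
definition lambda1 :: "('a::finite \<Rightarrow> 'a \<Rightarrow> real) \<Rightarrow> ('a \<Rightarrow> real) \<Rightarrow> ereal" where
  "lambda1 P \<pi> = (INF \<phi> \<in> {\<phi>::'a \<Rightarrow> real. \<exists>x y. \<phi> x \<noteq> \<phi> y}.
                     ereal (dirichlet P \<pi> \<phi> / var_pi \<pi> \<phi>))"

end

theory Submission
  imports Defs
begin


lemma mat_mult_assoc: "mat_mult (mat_mult A B) C = mat_mult A (mat_mult B C)"
  unfolding mat_mult_def
  by (auto simp: sum_distrib_left sum_distrib_right mult.assoc intro!: ext sum.swap[THEN trans])

lemma mat_mult_id_left[simp]: "mat_mult mat_id A = A"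
proof (intro ext)
  fix x z
  have "(\<Sum>y\<in>UNIV. (if x = y then 1 else 0) * A y z) = (\<Sum>y\<in>UNIV. (if x = y then A y z else 0))"
    by (rule sum.cong) auto
  thus "mat_mult mat_id A x z = A x z" unfolding mat_mult_def mat_id_def by simp
qed

lemma mat_mult_id_right[simp]: "mat_mult A mat_id = A"
  unfolding mat_mult_def mat_id_def by (auto intro!: ext simp: if_distrib cong: if_cong)

lemma mat_pow_add: "mat_pow P (a + b) = mat_mult (mat_pow P a) (mat_pow P b)"
  by (induction b) (auto simp: mat_mult_assoc)

lemma mat_pow_1[simp]: "mat_pow P (Suc 0) = P" by simp

lemma mat_pow_Suc': "mat_pow P (Suc n) = mat_mult P (mat_pow P n)"
  using mat_pow_add[of P 1 n] by simp

lemma stoch_pow: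
  assumes "stochastic P"
  shows "stochastic (mat_pow P n)"
proof (induction n)
  case 0 show ?case unfolding stochastic_def by (auto simp: mat_id_def)
next
  case (Suc n)
  have nn: "0 \<le> mat_pow P (Suc n) x y" for x y
    using Suc assms unfolding stochastic_def by (auto simp: mat_mult_def intro!: sum_nonneg)
  have "(\<Sum>y\<in>UNIV. mat_pow P (Suc n) x y) = 1" for x
  proof -
    have "(\<Sum>y\<in>UNIV. mat_pow P (Suc n) x y) = (\<Sum>z\<in>UNIV. mat_pow P n x z * (\<Sum>y\<in>UNIV. P z y))"
      by (simp add: mat_mult_def sum_distrib_left) (rule sum.swap)
    also have "\<dots> = 1" using Suc assms unfolding stochastic_def by simp
    finally show ?thesis .
  qed
  with nn show ?case unfolding stochastic_def by auto
qed

lemma stoch_le1: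
  assumes "stochastic P" shows "P x y \<le> 1"
proof -
  have "P x y \<le> (\<Sum>y\<in>UNIV. P x y)" using assms unfolding stochastic_def
    by (intro member_le_sum) auto
  thus ?thesis using assms unfolding stochastic_def by simp
qed

lemma stat_pow:
  assumes "stationary P \<pi>"
  shows "(\<Sum>x\<in>UNIV. \<pi> x * mat_pow P n x y) = \<pi> y"
proof (induction n arbitrary: y)
  case 0 thus ?case by (simp add: mat_id_def if_distrib cong: if_cong)
next
  case (Suc n)
  have "(\<Sum>x\<in>UNIV. \<pi> x * mat_pow P (Suc n) x y) = (\<Sum>z\<in>UNIV. (\<Sum>x\<in>UNIV. \<pi> x * mat_pow P n x z) * P z y)"
    by (simp add: mat_mult_def sum_distrib_left sum_distrib_right mult.assoc) (rule sum.swap)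
  also have "\<dots> = \<pi> y" using Suc assms unfolding stationary_def by simp
  finally show ?case .
qed

lemma pow_mono_entry:
  assumes "stochastic P"
  shows "mat_pow P a x z * mat_pow P b z y \<le> mat_pow P (a + b) x y"
proof -
  have "mat_pow P (a+b) x y = (\<Sum>w\<in>UNIV. mat_pow P a x w * mat_pow P b w y)"
    by (simp add: mat_pow_add mat_mult_def)
  also have "\<dots> \<ge> mat_pow P a x z * mat_pow P b z y"
    using stoch_pow[OF assms] unfolding stochastic_def
    by (intro member_le_sum) auto
  finally show ?thesis .
qed



lemma semigroup_large:
  fixes S :: "nat set"
  assumes add: "\<And>a b. a\<in>S \<Longrightarrow> b\<in>S \<Longrightarrow> a+b \<in> S" and pos: "\<And>a. a\<in>S \<Longrightarrow> a>0"
    and g: "Gcd S = 1" and ne: "S \<noteq> {}"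
  shows "\<exists>M. \<forall>n\<ge>M. n \<in> S"
proof -
  define S0 where "S0 = insert 0 S"
  have add0: "a + b \<in> S0" if "a \<in> S0" "b \<in> S0" for a b
    using that add unfolding S0_def by auto
  have addS: "a + b \<in> S" if "a \<in> S" "b \<in> S0" for a b
    using that add unfolding S0_def by auto
  have mult0: "q * a \<in> S0" if "a \<in> S0" for q a
  proof (induction q)
    case 0 thus ?case by (simp add: S0_def)
  next
    case (Suc q) thus ?case using add0[OF that Suc] by simp
  qed
  have multS: "q * a \<in> S" if "a \<in> S" "q > 0" for q a
  proof -
    obtain q' where q: "q = Suc q'" using \<open>q > 0\<close> by (cases q) auto
    have "q * a = a + q' * a" using q by simp
    thus ?thesis using addS[OF that(1) mult0[of a q']] that(1) by (simp add: S0_def)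
  qed
  define D where "D = {d::nat. d > 0 \<and> (\<exists>a\<in>S0. \<exists>b\<in>S0. a = b + d)}"
  obtain s where s: "s \<in> S" using ne by auto
  have "s \<in> D" using s pos[OF s] unfolding D_def S0_def by auto
  define d where "d = Least (\<lambda>d. d \<in> D)"
  have dD: "d \<in> D" unfolding d_def using \<open>s \<in> D\<close> by (rule LeastI)
  have dmin: "d \<le> e" if "e \<in> D" for e unfolding d_def using that by (rule Least_le)
  from dD obtain a b where ab: "a \<in> S0" "b \<in> S0" "a = b + d" "d > 0" unfolding D_def by auto
  have dvd: "d dvd t" if "t \<in> S" for t
  proof (rule ccontr)
    assume nd: "\<not> d dvd t"
    define q r where "q = t div d" and "r = t mod d"
    have r0: "r > 0" using nd unfolding r_def by (simp add: dvd_eq_mod_eq_0)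
    have rl: "r < d" unfolding r_def using ab(4) by simp
    have t: "t = q * d + r" unfolding q_def r_def by simp
    have "t + q * b = q * a + r" using t ab(3) by (simp add: algebra_simps)
    moreover have "t + q * b \<in> S0" using add0[OF _ mult0[OF ab(2)], of t] that unfolding S0_def by auto
    moreover have "q * a \<in> S0" using mult0[OF ab(1)] .
    ultimately have "r \<in> D" using r0 unfolding D_def by auto
    with dmin rl show False by fastforce
  qed
  have "d dvd Gcd S" using dvd by (intro Gcd_greatest) auto
  hence d1: "d = 1" using g by simp
  show ?thesis
  proof (cases "b = 0")
    case True
    hence "1 \<in> S" using ab d1 unfolding S0_def by auto
    hence "\<forall>n\<ge>1. n \<in> S" using multS[of 1] by fastforce
    thus ?thesis by blast
  next
    case False
    hence bS: "b \<in> S" using ab unfolding S0_def by auto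
    hence bp: "b > 0" using pos by auto
    have "n \<in> S" if "n \<ge> b * b" for n
    proof -
      define q r where "q = n div b" and "r = n mod b"
      have rl: "r < b" unfolding r_def using bp by simp
      have "q \<ge> b" unfolding q_def using that bp
        by (metis div_le_mono nonzero_mult_div_cancel_right not_gr0)
      hence qr: "q - r > 0" using rl by simp
      have "n = q * b + r" unfolding q_def r_def by simp
      also have "\<dots> = (q - r) * b + r * a" using ab(3) d1 \<open>q \<ge> b\<close> rl
        by (simp add: algebra_simps diff_mult_distrib)
      finally have "n = (q - r) * b + r * a" .
      thus ?thesis using addS[OF multS[OF bS qr] mult0[OF ab(1)]] by simp
    qed
    thus ?thesis by blast
  qed
qed



lemma pos_power:
  assumes "ergodic P"
  shows "\<exists>N. \<forall>x y. mat_pow P N x y > 0"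
proof -
  have st: "stochastic P" and irr: "irreducible_chain P" and ap: "aperiodic_chain P"
    using assms unfolding ergodic_def by auto
  have ex: "\<forall>x. \<exists>M. \<forall>n\<ge>M. mat_pow P n x x > 0"
  proof
    fix x
    define S where "S = {n. n > 0 \<and> mat_pow P n x x > 0}"
    have g: "Gcd S = 1" using ap unfolding aperiodic_chain_def period_def S_def by simp
    have ne: "S \<noteq> {}" using g by auto
    have add: "a + b \<in> S" if "a \<in> S" "b \<in> S" for a b
    proof -
      have "0 < mat_pow P a x x * mat_pow P b x x" using that unfolding S_def by simp
      also have "\<dots> \<le> mat_pow P (a+b) x x" by (rule pow_mono_entry[OF st])
      finally show ?thesis using that unfolding S_def by simp
    qed
    have posS: "a > 0" if "a \<in> S" for a using that unfolding S_def by simp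
    from semigroup_large[of S, OF add posS g ne] obtain M where "\<forall>n\<ge>M. n \<in> S"
      by blast
    hence "\<forall>n\<ge>M. mat_pow P n x x > 0" unfolding S_def by simp
    thus "\<exists>M. \<forall>n\<ge>M. mat_pow P n x x > 0" ..
  qed
  obtain M where M: "\<forall>x. \<forall>n\<ge>M x. mat_pow P n x x > 0" using choice[OF ex] by blast
  define k where "k x y = (SOME n. mat_pow P n x y > 0)" for x y
  have k: "mat_pow P (k x y) x y > 0" for x y
  proof -
    have "\<exists>n. mat_pow P n x y > 0" using irr unfolding irreducible_chain_def by simp
    thus ?thesis unfolding k_def by (rule someI_ex)
  qed
  define N where "N = Max (range M) + Max (range (case_prod k))"
  have "mat_pow P N x y > 0" for x y
  proof -
    have m1: "M x \<le> Max (range M)" by simp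
    have m2: "case_prod k (x,y) \<le> Max (range (case_prod k))"
      by (rule Max_ge[OF finite_imageI[OF finite] rangeI])
    have le: "M x \<le> N - k x y" and kN: "k x y \<le> N" proof -
      have m2': "k x y \<le> Max (range (case_prod k))" using m2 by simp
      show "M x \<le> N - k x y" "k x y \<le> N" unfolding N_def using m1 m2' by linarith+
    qed
    have "0 < mat_pow P (N - k x y) x x * mat_pow P (k x y) x y"
      using M le k by simp
    also have "\<dots> \<le> mat_pow P (N - k x y + k x y) x y" by (rule pow_mono_entry[OF st])
    finally show ?thesis using kN by simp
  qed
  thus ?thesis by blast
qed

lemma contraction_weak:
  fixes d :: "'a::finite \<Rightarrow> real"
  assumes "stochastic K"
  shows "(\<Sum>y\<in>UNIV. \<bar>\<Sum>x\<in>UNIV. d x * K x y\<bar>) \<le> (\<Sum>x\<in>UNIV. \<bar>d x\<bar>)"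
proof -
  have "(\<Sum>y\<in>UNIV. \<bar>\<Sum>x\<in>UNIV. d x * K x y\<bar>) \<le> (\<Sum>y\<in>UNIV. \<Sum>x\<in>UNIV. \<bar>d x\<bar> * K x y)"
  proof (rule sum_mono)
    fix y
    have "\<bar>\<Sum>x\<in>UNIV. d x * K x y\<bar> \<le> (\<Sum>x\<in>UNIV. \<bar>d x * K x y\<bar>)" by (rule sum_abs)
    also have "\<dots> = (\<Sum>x\<in>UNIV. \<bar>d x\<bar> * K x y)"
      using assms unfolding stochastic_def by (simp add: abs_mult)
    finally show "\<bar>\<Sum>x\<in>UNIV. d x * K x y\<bar> \<le> (\<Sum>x\<in>UNIV. \<bar>d x\<bar> * K x y)" .
  qed
  also have "\<dots> = (\<Sum>x\<in>UNIV. \<bar>d x\<bar> * (\<Sum>y\<in>UNIV. K x y))"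
    by (simp add: sum_distrib_left) (rule sum.swap)
  also have "\<dots> = (\<Sum>x\<in>UNIV. \<bar>d x\<bar>)" using assms unfolding stochastic_def by simp
  finally show ?thesis .
qed

lemma contraction:
  fixes d :: "'a::finite \<Rightarrow> real"
  assumes "stochastic K" and d0: "(\<Sum>x\<in>UNIV. d x) = 0"
  shows "(\<Sum>y\<in>UNIV. \<bar>\<Sum>x\<in>UNIV. d x * K x y\<bar>)
     \<le> (1 - (\<Sum>y\<in>UNIV. Min (range (\<lambda>x. K x y)))) * (\<Sum>x\<in>UNIV. \<bar>d x\<bar>)"
proof -
  define m where "m y = Min (range (\<lambda>x. K x y))" for y
  have mle: "m y \<le> K x y" for x y unfolding m_def by simp
  have eq: "(\<Sum>x\<in>UNIV. d x * K x y) = (\<Sum>x\<in>UNIV. d x * (K x y - m y))" for y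
  proof -
    have "(\<Sum>x\<in>UNIV. d x * (K x y - m y)) = (\<Sum>x\<in>UNIV. d x * K x y) - (\<Sum>x\<in>UNIV. d x * m y)"
      by (simp add: right_diff_distrib sum_subtractf)
    also have "(\<Sum>x\<in>UNIV. d x * m y) = (\<Sum>x\<in>UNIV. d x) * m y" by (simp add: sum_distrib_right)
    finally have "(\<Sum>x\<in>UNIV. d x * (K x y - m y)) = (\<Sum>x\<in>UNIV. d x * K x y) - (\<Sum>x\<in>UNIV. d x) * m y" .
    thus ?thesis using d0 by simp
  qed
  have "(\<Sum>y\<in>UNIV. \<bar>\<Sum>x\<in>UNIV. d x * K x y\<bar>) \<le> (\<Sum>y\<in>UNIV. \<Sum>x\<in>UNIV. \<bar>d x\<bar> * (K x y - m y))"
  proof (rule sum_mono)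
    fix y
    have "\<bar>\<Sum>x\<in>UNIV. d x * (K x y - m y)\<bar> \<le> (\<Sum>x\<in>UNIV. \<bar>d x * (K x y - m y)\<bar>)" by (rule sum_abs)
    also have "\<dots> = (\<Sum>x\<in>UNIV. \<bar>d x\<bar> * (K x y - m y))"
      using mle by (simp add: abs_mult)
    finally show "\<bar>\<Sum>x\<in>UNIV. d x * K x y\<bar> \<le> (\<Sum>x\<in>UNIV. \<bar>d x\<bar> * (K x y - m y))"
      unfolding eq .
  qed
  also have "\<dots> = (\<Sum>x\<in>UNIV. \<bar>d x\<bar> * (\<Sum>y\<in>UNIV. K x y - m y))"
    by (simp add: sum_distrib_left) (rule sum.swap)
  also have "\<dots> = (\<Sum>x\<in>UNIV. \<bar>d x\<bar> * (1 - (\<Sum>y\<in>UNIV. m y)))"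
    using assms(1) unfolding stochastic_def by (simp add: sum_subtractf)
  also have "\<dots> = (1 - (\<Sum>y\<in>UNIV. m y)) * (\<Sum>x\<in>UNIV. \<bar>d x\<bar>)"
    by (simp add: sum_distrib_left mult.commute)
  finally show ?thesis unfolding m_def .
qed

lemma converge:
  assumes erg: "ergodic P" and stat: "stationary P \<pi>" and e: "\<epsilon> > 0"
  shows "\<exists>T. \<forall>t\<ge>T. \<forall>x. var_dist (mat_pow P t x) \<pi> \<le> \<epsilon>"
proof -
  have st: "stochastic P" using erg unfolding ergodic_def by auto
  obtain N where N: "\<And>x y. mat_pow P N x y > 0" using pos_power[OF erg] by blast
  define K where "K = mat_pow P N"
  have stK: "stochastic K" unfolding K_def by (rule stoch_pow[OF st])
  define \<theta> where "\<theta> = (\<Sum>y\<in>UNIV. Min (range (\<lambda>x. K x y)))"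
  have \<theta>pos: "\<theta> > 0" unfolding \<theta>_def
    by (intro sum_pos) (auto simp: K_def N)
  obtain x0 :: 'a where True by simp
  have "\<theta> \<le> (\<Sum>y\<in>UNIV. K x0 y)" unfolding \<theta>_def by (intro sum_mono) simp
  hence \<theta>le: "\<theta> \<le> 1" using stK unfolding stochastic_def by simp
  define a where "a t x = (\<Sum>y\<in>UNIV. \<bar>mat_pow P t x y - \<pi> y\<bar>)" for t x
  have dsum: "(\<Sum>z\<in>UNIV. mat_pow P t x z - \<pi> z) = 0" for t x
    using stoch_pow[OF st, of t] stat unfolding stochastic_def stationary_def
    by (simp add: sum_subtractf)
  have rep: "mat_pow P (t + n) x y - \<pi> y = (\<Sum>z\<in>UNIV. (mat_pow P t x z - \<pi> z) * mat_pow P n z y)"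
    for t n x y
  proof -
    have "mat_pow P (t + n) x y - \<pi> y = (\<Sum>z\<in>UNIV. mat_pow P t x z * mat_pow P n z y) - (\<Sum>z\<in>UNIV. \<pi> z * mat_pow P n z y)"
      using stat_pow[OF stat, of n y] by (simp add: mat_pow_add mat_mult_def)
    also have "\<dots> = (\<Sum>z\<in>UNIV. (mat_pow P t x z - \<pi> z) * mat_pow P n z y)"
      by (simp add: left_diff_distrib sum_subtractf)
    finally show ?thesis .
  qed
  have stepN: "a (t + N) x \<le> (1 - \<theta>) * a t x" for t x
    unfolding a_def rep \<theta>_def K_def
    using contraction[OF stK[unfolded K_def] dsum] by simp
  have step1: "a (t + 1) x \<le> a t x" for t x
    unfolding a_def rep using contraction_weak[OF stoch_pow[OF st, of 1]] by simp
  have mono: "a t x \<le> a s x" if "s \<le> t" for s t x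
    using that
  proof (induction t)
    case 0 thus ?case by simp
  next
    case (Suc t)
    show ?case
    proof (cases "s = Suc t")
      case False
      hence "s \<le> t" using Suc.prems by simp
      thus ?thesis using Suc.IH step1[of t x] by simp
    qed simp
  qed
  have a2: "a t x \<le> 2" for t x
  proof -
    have "a t x \<le> (\<Sum>y\<in>UNIV. mat_pow P t x y + \<pi> y)"
      unfolding a_def
    proof (intro sum_mono)
      fix y
      have "0 \<le> mat_pow P t x y" "0 \<le> \<pi> y"
        using stoch_pow[OF st, of t] stat unfolding stochastic_def stationary_def by auto
      thus "\<bar>mat_pow P t x y - \<pi> y\<bar> \<le> mat_pow P t x y + \<pi> y" by linarith
    qed
    also have "\<dots> = 2" using stoch_pow[OF st, of t] stat unfolding stochastic_def stationary_def
      by (simp add: sum.distrib)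
    finally show ?thesis .
  qed
  have aq: "a (q * N) x \<le> 2 * (1 - \<theta>) ^ q" for q x
  proof (induction q)
    case 0 thus ?case using a2 by simp
  next
    case (Suc q)
    have "a (Suc q * N) x = a (q * N + N) x" by (simp add: add.commute)
    also have "\<dots> \<le> (1 - \<theta>) * a (q * N) x" by (rule stepN)
    also have "\<dots> \<le> (1 - \<theta>) * (2 * (1 - \<theta>) ^ q)"
      using Suc \<theta>le by (intro mult_left_mono) auto
    finally show ?case by (simp add: algebra_simps)
  qed
  obtain q where q: "(1 - \<theta>) ^ q < \<epsilon>" using real_arch_pow_inv[OF e, of "1 - \<theta>"] \<theta>pos by auto
  have "var_dist (mat_pow P t x) \<pi> \<le> \<epsilon>" if "t \<ge> q * N" for t x
  proof -
    have "a t x \<le> 2 * \<epsilon>" using mono[OF that, of x] aq[of q x] q by linarith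
    thus ?thesis unfolding var_dist_def a_def by simp
  qed
  thus ?thesis by blast
qed



definition DD :: "('a::finite \<Rightarrow> 'a \<Rightarrow> real) \<Rightarrow> ('a \<Rightarrow> real) \<Rightarrow> ('a \<Rightarrow> real) \<Rightarrow> real" where
  "DD K \<pi> g = (\<Sum>x\<in>UNIV. \<Sum>y\<in>UNIV. \<pi> x * K x y * (g y - g x)^2)"

lemma DD_P: "DD P \<pi> g = 2 * dirichlet P \<pi> g"
  unfolding DD_def dirichlet_def by (simp add: power2_commute)

lemma sq_split:
  fixes u v :: real assumes n: "n > 0"
  shows "(u + v)^2 \<le> (1 + 1/n) * v^2 + (1 + n) * u^2"
proof -
  have "n * (u + v)^2 \<le> n * ((1 + 1/n) * v^2 + (1 + n) * u^2)"
  proof -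
    have "n * ((1 + 1/n) * v^2 + (1 + n) * u^2) - n * (u + v)^2 = (v - n * u)^2"
      using n by (simp add: field_simps power2_eq_square)
    thus ?thesis by (metis diff_ge_0_iff_ge zero_le_power2)
  qed
  thus ?thesis using n by simp
qed

lemma DD_pow:
  assumes st: "stochastic P" and stat: "stationary P \<pi>"
  shows "DD (mat_pow P n) \<pi> g \<le> (real n)^2 * DD P \<pi> g"
proof (induction n)
  case 0
  have "DD (mat_pow P 0) \<pi> g = 0" unfolding DD_def
    by (auto intro!: sum.neutral simp: mat_id_def)
  thus ?case by simp
next
  case (Suc n)
  show ?case
  proof (cases "n = 0")
    case True thus ?thesis by simp
  next
    case False
    hence np: "real n > 0" by simp
    have pi0: "\<pi> x \<ge> 0" for x using stat unfolding stationary_def by auto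
    have Pn0: "mat_pow P n x y \<ge> 0" for x y using stoch_pow[OF st, of n] unfolding stochastic_def by auto
    have P0: "P x y \<ge> 0" for x y using st unfolding stochastic_def by auto
    have "DD (mat_pow P (Suc n)) \<pi> g =
      (\<Sum>x\<in>UNIV. \<Sum>z\<in>UNIV. \<Sum>y\<in>UNIV. \<pi> x * mat_pow P n x z * P z y * (g y - g x)^2)"
      unfolding DD_def
      by (simp add: mat_mult_def sum_distrib_left sum_distrib_right mult.assoc)
         (intro sum.cong refl sum.swap)
    also have "\<dots> \<le> (\<Sum>x\<in>UNIV. \<Sum>z\<in>UNIV. \<Sum>y\<in>UNIV. \<pi> x * mat_pow P n x z * P z y *
        ((1 + 1/n) * (g z - g x)^2 + (1 + n) * (g y - g z)^2))"
    proof (intro sum_mono)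
      fix x z y
      have "(g y - g x)^2 \<le> (1 + 1/n) * (g z - g x)^2 + (1 + n) * (g y - g z)^2"
        using sq_split[OF np, of "g y - g z" "g z - g x"] by simp
      thus "\<pi> x * mat_pow P n x z * P z y * (g y - g x)^2 \<le> \<pi> x * mat_pow P n x z * P z y *
        ((1 + 1/n) * (g z - g x)^2 + (1 + n) * (g y - g z)^2)"
        using pi0 Pn0 P0 by (intro mult_left_mono) auto
    qed
    also have "\<dots> = (1 + 1/n) * (\<Sum>x\<in>UNIV. \<Sum>z\<in>UNIV. \<pi> x * mat_pow P n x z * (g z - g x)^2 * (\<Sum>y\<in>UNIV. P z y))
        + (1 + n) * (\<Sum>z\<in>UNIV. \<Sum>y\<in>UNIV. (\<Sum>x\<in>UNIV. \<pi> x * mat_pow P n x z) * P z y * (g y - g z)^2)"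
    proof -
      have e1: "(\<Sum>x\<in>UNIV. \<Sum>z\<in>UNIV. \<Sum>y\<in>UNIV. \<pi> x * mat_pow P n x z * P z y * ((1 + 1/n) * (g z - g x)^2))
          = (1 + 1/n) * (\<Sum>x\<in>UNIV. \<Sum>z\<in>UNIV. \<pi> x * mat_pow P n x z * (g z - g x)^2 * (\<Sum>y\<in>UNIV. P z y))"
        by (simp add: sum_distrib_left sum_distrib_right mult_ac)
      have e2: "(\<Sum>x\<in>UNIV. \<Sum>z\<in>UNIV. \<Sum>y\<in>UNIV. \<pi> x * mat_pow P n x z * P z y * ((1 + n) * (g y - g z)^2))
          = (1 + n) * (\<Sum>z\<in>UNIV. \<Sum>y\<in>UNIV. (\<Sum>x\<in>UNIV. \<pi> x * mat_pow P n x z) * P z y * (g y - g z)^2)"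
      proof -
        have "(\<Sum>x\<in>UNIV. \<Sum>z\<in>UNIV. \<Sum>y\<in>UNIV. \<pi> x * mat_pow P n x z * P z y * ((1 + n) * (g y - g z)^2))
           = (\<Sum>z\<in>UNIV. \<Sum>x\<in>UNIV. \<Sum>y\<in>UNIV. \<pi> x * mat_pow P n x z * P z y * ((1 + n) * (g y - g z)^2))"
          by (rule sum.swap)
        also have "\<dots> = (\<Sum>z\<in>UNIV. \<Sum>y\<in>UNIV. \<Sum>x\<in>UNIV. \<pi> x * mat_pow P n x z * P z y * ((1 + n) * (g y - g z)^2))"
          by (intro sum.cong refl sum.swap)
        also have "\<dots> = (1 + n) * (\<Sum>z\<in>UNIV. \<Sum>y\<in>UNIV. (\<Sum>x\<in>UNIV. \<pi> x * mat_pow P n x z) * P z y * (g y - g z)^2)"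
          by (simp add: sum_distrib_left sum_distrib_right mult_ac)
        finally show ?thesis .
      qed
      show ?thesis unfolding e1[symmetric] e2[symmetric]
        by (simp add: distrib_left sum.distrib)
    qed
    also have "\<dots> = (1 + 1/n) * DD (mat_pow P n) \<pi> g + (1 + n) * DD P \<pi> g"
      using st stat_pow[OF stat, of n] unfolding stochastic_def DD_def by simp
    also have "\<dots> \<le> (1 + 1/n) * ((real n)^2 * DD P \<pi> g) + (1 + n) * DD P \<pi> g"
      using Suc.IH np by (intro add_right_mono mult_left_mono) auto
    also have "\<dots> = (real (Suc n))^2 * DD P \<pi> g"
      using np by (simp add: field_simps power2_eq_square)
    finally show ?thesis .
  qed
qed



lemma tv_set:
  fixes \<mu> \<pi> :: "'a::finite \<Rightarrow> real"
  assumes "(\<Sum>y\<in>UNIV. \<mu> y) = 1" "(\<Sum>y\<in>UNIV. \<pi> y) = 1"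
  shows "(\<Sum>y\<in>A. \<mu> y) \<ge> (\<Sum>y\<in>A. \<pi> y) - var_dist \<mu> \<pi>"
proof -
  have split: "(\<Sum>y\<in>UNIV. f y) = (\<Sum>y\<in>A. f y) + (\<Sum>y\<in>-A. f y)" for f :: "'a \<Rightarrow> real"
  proof -
    have "sum f A + sum f (-A) = sum f (A \<union> -A)" by (rule sum.union_disjoint[symmetric]) auto
    thus ?thesis by simp
  qed
  have s0: "(\<Sum>y\<in>A. \<pi> y - \<mu> y) = - (\<Sum>y\<in>-A. \<pi> y - \<mu> y)"
    using split[of "\<lambda>y. \<pi> y - \<mu> y"] assms by (simp add: sum_subtractf)
  have a1: "(\<Sum>y\<in>A. \<pi> y - \<mu> y) \<le> (\<Sum>y\<in>A. \<bar>\<mu> y - \<pi> y\<bar>)"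
    by (intro sum_mono) auto
  have a2: "- (\<Sum>y\<in>-A. \<pi> y - \<mu> y) \<le> (\<Sum>y\<in>-A. \<bar>\<mu> y - \<pi> y\<bar>)"
    by (simp add: sum_negf[symmetric]) (intro sum_mono, auto)
  have "2 * (\<Sum>y\<in>A. \<pi> y - \<mu> y) \<le> (\<Sum>y\<in>UNIV. \<bar>\<mu> y - \<pi> y\<bar>)"
    using a1 a2 s0 split[of "\<lambda>y. \<bar>\<mu> y - \<pi> y\<bar>"] by linarith
  thus ?thesis unfolding var_dist_def by (simp add: sum_subtractf)
qed

lemma DD_lower:
  fixes K :: "'a::finite \<Rightarrow> 'a \<Rightarrow> real"
  assumes K0: "\<And>x y. K x y \<ge> 0" and K1: "\<And>x. (\<Sum>y\<in>UNIV. K x y) = 1"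
    and mix: "\<And>x. var_dist (K x) \<pi> \<le> \<epsilon>"
    and pi0: "\<And>x. \<pi> x \<ge> 0" and pi1: "(\<Sum>x\<in>UNIV. \<pi> x) = 1"
    and g0: "\<And>x. g x \<ge> 0" and half: "(\<Sum>y\<in>{y. g y = 0}. \<pi> y) \<ge> 1/2"
  shows "DD K \<pi> g \<ge> (1/2 - \<epsilon>) * (\<Sum>x\<in>UNIV. \<pi> x * (g x)^2)"
proof -
  let ?Z = "{y. g y = 0}"
  have "(1/2 - \<epsilon>) * (\<Sum>x\<in>UNIV. \<pi> x * (g x)^2) = (\<Sum>x\<in>UNIV. \<pi> x * (g x)^2 * (1/2 - \<epsilon>))"
    by (simp add: sum_distrib_left mult_ac)
  also have "\<dots> \<le> (\<Sum>x\<in>UNIV. \<pi> x * (g x)^2 * (\<Sum>y\<in>?Z. K x y))"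
  proof (intro sum_mono mult_left_mono)
    fix x
    show "1/2 - \<epsilon> \<le> (\<Sum>y\<in>?Z. K x y)"
      using tv_set[OF K1[of x] pi1, of ?Z] mix[of x] half by linarith
    show "0 \<le> \<pi> x * (g x)^2" using pi0[of x] by simp
  qed
  also have "\<dots> = (\<Sum>x\<in>UNIV. \<Sum>y\<in>?Z. \<pi> x * K x y * (g y - g x)^2)"
    by (simp add: sum_distrib_left mult_ac)
  also have "\<dots> \<le> DD K \<pi> g" unfolding DD_def
    using pi0 K0 by (intro sum_mono sum_mono2) auto
  finally show ?thesis .
qed

lemma median:
  fixes \<phi> \<pi> :: "'a::finite \<Rightarrow> real"
  assumes pi0: "\<And>x. \<pi> x \<ge> 0" and pi1: "(\<Sum>x\<in>UNIV. \<pi> x) = 1"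
  shows "\<exists>m. (\<Sum>x\<in>{x. \<phi> x \<le> m}. \<pi> x) \<ge> 1/2 \<and> (\<Sum>x\<in>{x. \<phi> x \<ge> m}. \<pi> x) \<ge> 1/2"
proof -
  define F where "F v = (\<Sum>x\<in>{x. \<phi> x \<le> v}. \<pi> x)" for v
  define V where "V = {v \<in> range \<phi>. F v \<ge> 1/2}"
  have "Max (range \<phi>) \<in> V"
  proof -
    have "{x. \<phi> x \<le> Max (range \<phi>)} = UNIV" by auto
    thus ?thesis unfolding V_def F_def using pi1 by auto
  qed
  hence Vne: "V \<noteq> {}" by auto
  have Vfin: "finite V" unfolding V_def by simp
  define m where "m = Min V"
  have mV: "m \<in> V" unfolding m_def using Vne Vfin by simp
  have split: "(\<Sum>x\<in>UNIV. \<pi> x) = (\<Sum>x\<in>{x. \<phi> x < m}. \<pi> x) + (\<Sum>x\<in>{x. \<phi> x \<ge> m}. \<pi> x)"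
  proof -
    have "UNIV = {x. \<phi> x < m} \<union> {x. \<phi> x \<ge> m}" by auto
    moreover have "{x. \<phi> x < m} \<inter> {x. \<phi> x \<ge> m} = {}" by auto
    ultimately show ?thesis by (metis finite sum.union_disjoint)
  qed
  have "(\<Sum>x\<in>{x. \<phi> x < m}. \<pi> x) \<le> 1/2"
  proof (rule ccontr)
    assume c: "\<not> ?thesis"
    have ne: "{x. \<phi> x < m} \<noteq> {}"
    proof
      assume "{x. \<phi> x < m} = {}"
      hence "(\<Sum>x\<in>{x. \<phi> x < m}. \<pi> x) = 0" by (simp only: sum.empty)
      with c show False by simp
    qed
    define v where "v = Max (\<phi> ` {x. \<phi> x < m})"
    have vin: "v \<in> \<phi> ` {x. \<phi> x < m}" unfolding v_def using ne by simp
    hence vm: "v < m" by auto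
    have "{x. \<phi> x \<le> v} = {x. \<phi> x < m}"
    proof
      show "{x. \<phi> x \<le> v} \<subseteq> {x. \<phi> x < m}" using vm by auto
      show "{x. \<phi> x < m} \<subseteq> {x. \<phi> x \<le> v}" unfolding v_def by auto
    qed
    hence "v \<in> V" unfolding V_def F_def using c vin by auto
    hence "m \<le> v" unfolding m_def using Vfin by simp
    with vm show False by simp
  qed
  hence "(\<Sum>x\<in>{x. \<phi> x \<ge> m}. \<pi> x) \<ge> 1/2" using split pi1 by linarith
  moreover have "(\<Sum>x\<in>{x. \<phi> x \<le> m}. \<pi> x) \<ge> 1/2" using mV unfolding V_def F_def by simp
  ultimately show ?thesis by blast
qed

lemma var_le_shift:
  fixes \<phi> \<pi> :: "'a::finite \<Rightarrow> real"
  assumes pi1: "(\<Sum>x\<in>UNIV. \<pi> x) = 1"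
  shows "var_pi \<pi> \<phi> \<le> (\<Sum>x\<in>UNIV. \<pi> x * (\<phi> x - m)^2)"
proof -
  define \<mu> where "\<mu> = (\<Sum>y\<in>UNIV. \<pi> y * \<phi> y)"
  have z: "(\<Sum>x\<in>UNIV. \<pi> x * (\<phi> x - \<mu>)) = 0"
    using pi1 unfolding \<mu>_def by (simp add: right_diff_distrib sum_subtractf sum_distrib_right[symmetric])
  have "(\<Sum>x\<in>UNIV. \<pi> x * (\<phi> x - m)^2) = (\<Sum>x\<in>UNIV. \<pi> x * (\<phi> x - \<mu>)^2 + 2 * (\<mu> - m) * (\<pi> x * (\<phi> x - \<mu>)) + (\<mu> - m)^2 * \<pi> x)"
    by (intro sum.cong refl) (simp add: power2_eq_square algebra_simps)
  also have "\<dots> = var_pi \<pi> \<phi> + 2 * (\<mu> - m) * (\<Sum>x\<in>UNIV. \<pi> x * (\<phi> x - \<mu>)) + (\<mu> - m)^2 * (\<Sum>x\<in>UNIV. \<pi> x)"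
    unfolding var_pi_def \<mu>_def by (simp add: sum.distrib sum_distrib_left)
  finally show ?thesis using z pi1 by simp
qed

lemma maxsq:
  fixes a b :: real
  shows "(max a 0 - max b 0)^2 + (max (-a) 0 - max (-b) 0)^2 \<le> (a - b)^2"
proof (cases "a \<ge> 0")
  case True
  show ?thesis
  proof (cases "b \<ge> 0")
    case True thus ?thesis using \<open>a \<ge> 0\<close> by simp
  next
    case False
    have "a * b \<le> 0" using True False by (intro mult_nonneg_nonpos) auto
    moreover have "(a - b)^2 = a^2 + b^2 - 2 * (a * b)" by (simp add: power2_eq_square algebra_simps)
    ultimately show ?thesis using True False by simp
  qed
next
  case False
  show ?thesis
  proof (cases "b \<ge> 0")
    case True
    have "a * b \<le> 0" using True False by (intro mult_nonpos_nonneg) auto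
    moreover have "(a - b)^2 = a^2 + b^2 - 2 * (a * b)" by (simp add: power2_eq_square algebra_simps)
    ultimately show ?thesis using True False by simp
  next
    case b: False
    have "(-a - -b)^2 = (a - b)^2" by (simp add: power2_eq_square algebra_simps)
    thus ?thesis using b False by simp
  qed
qed

lemma dirichlet_bound:
  fixes P :: "'a::finite \<Rightarrow> 'a \<Rightarrow> real"
  assumes P0: "\<And>x y. P x y \<ge> 0" and pi0: "\<And>x. \<pi> x \<ge> 0" and pi1: "(\<Sum>x\<in>UNIV. \<pi> x) = 1"
    and c0: "c \<ge> 0"
    and H: "\<And>g. (\<And>x. g x \<ge> 0) \<Longrightarrow> (\<Sum>y\<in>{y. g y = 0}. \<pi> y) \<ge> 1/2 \<Longrightarrow>
              c * (\<Sum>x\<in>UNIV. \<pi> x * (g x)^2) \<le> dirichlet P \<pi> g"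
  shows "c * var_pi \<pi> \<phi> \<le> dirichlet P \<pi> \<phi>"
proof -
  obtain m where m1: "(\<Sum>x\<in>{x. \<phi> x \<le> m}. \<pi> x) \<ge> 1/2" and m2: "(\<Sum>x\<in>{x. \<phi> x \<ge> m}. \<pi> x) \<ge> 1/2"
    using median[OF pi0 pi1, of \<phi>] by blast
  define f where "f x = max (\<phi> x - m) 0" for x
  define h where "h x = max (m - \<phi> x) 0" for x
  have "{y. f y = 0} = {x. \<phi> x \<le> m}" unfolding f_def by (auto simp: max_def)
  hence Hf: "c * (\<Sum>x\<in>UNIV. \<pi> x * (f x)^2) \<le> dirichlet P \<pi> f"
    using m1 by (intro H) (auto simp: f_def)
  have "{y. h y = 0} = {x. \<phi> x \<ge> m}" unfolding h_def by (auto simp: max_def)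
  hence Hh: "c * (\<Sum>x\<in>UNIV. \<pi> x * (h x)^2) \<le> dirichlet P \<pi> h"
    using m2 by (intro H) (auto simp: h_def)
  have pt: "(f x - f y)^2 + (h x - h y)^2 \<le> (\<phi> x - \<phi> y)^2" for x y
    unfolding f_def h_def using maxsq[of "\<phi> x - m" "\<phi> y - m"] by simp
  have "dirichlet P \<pi> f + dirichlet P \<pi> h \<le> dirichlet P \<pi> \<phi>"
    unfolding dirichlet_def
    by (simp add: sum.distrib[symmetric] distrib_left[symmetric])
       (intro sum_mono mult_left_mono pt, auto intro: mult_nonneg_nonneg pi0 P0)
  moreover have eqS: "(\<Sum>x\<in>UNIV. \<pi> x * (f x)^2) + (\<Sum>x\<in>UNIV. \<pi> x * (h x)^2) = (\<Sum>x\<in>UNIV. \<pi> x * (\<phi> x - m)^2)"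
    unfolding sum.distrib[symmetric]
    by (intro sum.cong refl) (auto simp: f_def h_def max_def power2_eq_square algebra_simps)
  moreover have "c * var_pi \<pi> \<phi> \<le> c * (\<Sum>x\<in>UNIV. \<pi> x * (\<phi> x - m)^2)"
    using var_le_shift[OF pi1] c0 by (intro mult_left_mono) auto
  moreover have "c * (\<Sum>x\<in>UNIV. \<pi> x * (f x)^2) + c * (\<Sum>x\<in>UNIV. \<pi> x * (h x)^2) = c * (\<Sum>x\<in>UNIV. \<pi> x * (\<phi> x - m)^2)"
    unfolding eqS[symmetric] by (rule distrib_left[symmetric])
  ultimately show ?thesis using Hf Hh by linarith
qed

lemma lambda_bound:
  fixes P :: "'a::finite \<Rightarrow> 'a \<Rightarrow> real"
  assumes P0: "\<And>x y. P x y \<ge> 0" and pi0: "\<And>x. \<pi> x > 0" and pi1: "(\<Sum>x\<in>UNIV. \<pi> x) = 1"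
    and c0: "c \<ge> 0"
    and H: "\<And>g. (\<And>x. g x \<ge> 0) \<Longrightarrow> (\<Sum>y\<in>{y. g y = 0}. \<pi> y) \<ge> 1/2 \<Longrightarrow>
              c * (\<Sum>x\<in>UNIV. \<pi> x * (g x)^2) \<le> dirichlet P \<pi> g"
  shows "ereal c \<le> lambda1 P \<pi>"
  unfolding lambda1_def
proof (rule INF_greatest)
  fix \<phi> :: "'a \<Rightarrow> real" assume "\<phi> \<in> {\<phi>. \<exists>x y. \<phi> x \<noteq> \<phi> y}"
  then obtain x y where xy: "\<phi> x \<noteq> \<phi> y" by auto
  have vpos: "var_pi \<pi> \<phi> > 0"
  proof (rule ccontr)
    define \<mu> where "\<mu> = (\<Sum>y\<in>UNIV. \<pi> y * \<phi> y)"
    assume "\<not> var_pi \<pi> \<phi> > 0"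
    moreover have "var_pi \<pi> \<phi> \<ge> 0" unfolding var_pi_def
      by (intro sum_nonneg mult_nonneg_nonneg less_imp_le[OF pi0] zero_le_power2)
    ultimately have "var_pi \<pi> \<phi> = 0" by simp
    hence "\<forall>z\<in>UNIV. \<pi> z * (\<phi> z - \<mu>)^2 = 0" unfolding var_pi_def \<mu>_def
      by (subst (asm) sum_nonneg_eq_0_iff) (auto intro!: mult_nonneg_nonneg less_imp_le[OF pi0])
    hence "\<phi> z = \<mu>" for z using pi0[of z] by (metis less_irrefl mult_eq_0_iff power_eq_0_iff right_minus_eq UNIV_I)
    with xy show False by simp
  qed
  have "c * var_pi \<pi> \<phi> \<le> dirichlet P \<pi> \<phi>"
    by (rule dirichlet_bound[OF P0 _ pi1 c0 H]) (auto intro: less_imp_le pi0)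
  hence "c \<le> dirichlet P \<pi> \<phi> / var_pi \<pi> \<phi>" using vpos by (simp add: le_divide_eq)
  thus "ereal c \<le> ereal (dirichlet P \<pi> \<phi> / var_pi \<pi> \<phi>)" by simp
qed



lemma binom_step:
  fixes f :: "nat \<Rightarrow> real"
  shows "(\<Sum>j\<le>Suc n. real (Suc n choose j) * (-1)^(Suc n + j) * f j) =
    (\<Sum>j\<le>n. real (n choose j) * (-1)^(n+j) * f (Suc j)) - (\<Sum>j\<le>n. real (n choose j) * (-1)^(n+j) * f j)"
proof -
  define b where "b n j = real (n choose j) * (-1)^(n+j)" for n j :: nat
  have bs: "b (Suc n) (Suc i) = b n i - b n (Suc i)" for i
    unfolding b_def by (simp add: algebra_simps)
  have b0: "b (Suc n) 0 = - b n 0" unfolding b_def by simp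
  have bn: "b n (Suc n) = 0" unfolding b_def by simp
  have "(\<Sum>j\<le>Suc n. b (Suc n) j * f j) = b (Suc n) 0 * f 0 + (\<Sum>i\<le>n. b (Suc n) (Suc i) * f (Suc i))"
    by (rule sum.atMost_Suc_shift)
  also have "(\<Sum>i\<le>n. b (Suc n) (Suc i) * f (Suc i)) = (\<Sum>i\<le>n. b n i * f (Suc i)) - (\<Sum>i\<le>n. b n (Suc i) * f (Suc i))"
    unfolding bs by (simp add: left_diff_distrib sum_subtractf)
  also have "(\<Sum>i\<le>n. b n (Suc i) * f (Suc i)) = (\<Sum>j\<le>Suc n. b n j * f j) - b n 0 * f 0"
    using sum.atMost_Suc_shift[of "\<lambda>j. b n j * f j" n] by simp
  also have "(\<Sum>j\<le>Suc n. b n j * f j) = (\<Sum>j\<le>n. b n j * f j)" using bn by simp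
  finally show ?thesis unfolding b_def[symmetric] using b0 by simp
qed

lemma mat_id_right_entry: "(\<Sum>z\<in>UNIV. A x z * mat_id z y) = (A::'a::finite \<Rightarrow> 'a \<Rightarrow> real) x y"
  using fun_cong[OF fun_cong[OF mat_mult_id_right[of A]], of x y] unfolding mat_mult_def .

lemma genpow:
  "mat_pow (gen_matrix P) n x y = (\<Sum>j\<le>n. real (n choose j) * (-1)^(n+j) * mat_pow P j x y)"
proof (induction n arbitrary: y)
  case 0 thus ?case by simp
next
  case (Suc n)
  have "mat_pow (gen_matrix P) (Suc n) x y = (\<Sum>z\<in>UNIV. mat_pow (gen_matrix P) n x z * P z y) - mat_pow (gen_matrix P) n x y"
    by (simp add: mat_mult_def gen_matrix_def right_diff_distrib sum_subtractf mat_id_right_entry)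
  also have "(\<Sum>z\<in>UNIV. mat_pow (gen_matrix P) n x z * P z y) = (\<Sum>j\<le>n. real (n choose j) * (-1)^(n+j) * mat_pow P (Suc j) x y)"
    unfolding Suc.IH
    by (simp add: mat_mult_def sum_distrib_left sum_distrib_right mult.assoc) (rule sum.swap)
  finally show ?case unfolding Suc.IH binom_step by simp
qed

definition Hs :: "('a::finite \<Rightarrow> 'a \<Rightarrow> real) \<Rightarrow> real \<Rightarrow> 'a \<Rightarrow> 'a \<Rightarrow> real" where
  "Hs P t x y = (\<Sum>j. t^j / fact j * mat_pow P j x y)"

lemma summable_expabs: "summable (\<lambda>j. \<bar>t\<bar>^j / fact j :: real)"
  using summable_exp[of "\<bar>t\<bar>"] by (simp add: divide_inverse mult.commute)

lemma exp_sums': "(\<lambda>j. t^j / fact j :: real) sums exp t"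
  using exp_converges[of t] by (simp add: divide_inverse mult.commute scaleR_conv_of_real)

lemma Hs_summable:
  assumes st: "stochastic P"
  shows "summable (\<lambda>j. norm (t^j / fact j * mat_pow P j x y))"
proof (rule summable_comparison_test[OF _ summable_expabs[of t]])
  have "0 \<le> mat_pow P j x y" "mat_pow P j x y \<le> 1" for j
    using stoch_pow[OF st, of j] stoch_le1[OF stoch_pow[OF st, of j]] unfolding stochastic_def by auto
  then show "\<exists>N. \<forall>n\<ge>N. norm (norm (t ^ n / fact n * mat_pow P n x y)) \<le> \<bar>t\<bar> ^ n / fact n"
  proof (intro exI[of _ 0] allI impI)
    fix n :: nat
    have "\<bar>t\<bar>^n * mat_pow P n x y / fact n \<le> \<bar>t\<bar>^n / fact n"
      using \<open>\<And>j. 0 \<le> mat_pow P j x y\<close> \<open>\<And>j. mat_pow P j x y \<le> 1\<close>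
      by (intro divide_right_mono mult_left_le) auto
    thus "norm (norm (t ^ n / fact n * mat_pow P n x y)) \<le> \<bar>t\<bar> ^ n / fact n"
      using \<open>\<And>j. 0 \<le> mat_pow P j x y\<close> by (simp add: abs_mult power_abs)
  qed
qed

lemma Hs_sums:
  assumes st: "stochastic P"
  shows "(\<lambda>j. t^j / fact j * mat_pow P j x y) sums Hs P t x y"
  unfolding Hs_def using summable_norm_cancel[OF Hs_summable[OF st]] by (rule summable_sums)

lemma exp_rep:
  assumes st: "stochastic P"
  shows "exp_gen P t x y = exp (-t) * Hs P t x y"
proof -
  define a where "a i = t^i / fact i * mat_pow P i x y" for i
  define b where "b k = (-t)^k / fact k" for k
  have sa: "summable (\<lambda>k. norm (a k))" unfolding a_def by (rule Hs_summable[OF st])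
  have sb: "summable (\<lambda>k. norm (b k))" unfolding b_def using summable_expabs[of t]
    by (simp add: power_abs)
  have eb: "suminf b = exp (-t)" unfolding b_def using exp_sums'[of "-t"] by (simp add: sums_iff)
  have "suminf a * suminf b = (\<Sum>k. \<Sum>i\<le>k. a i * b (k - i))"
    by (rule Cauchy_product[OF sa sb])
  also have "(\<lambda>k. \<Sum>i\<le>k. a i * b (k - i)) = (\<lambda>k. t^k / fact k * mat_pow (gen_matrix P) k x y)"
  proof (rule ext)
    fix k
    have "a i * b (k - i) = t^k / fact k * (real (k choose i) * (-1)^(k+i) * mat_pow P i x y)" if "i \<le> k" for i
    proof -
      have pw: "t^i * (-t)^(k-i) = (-1)^(k+i) * t^k"
      proof -
        have "t^i * (-t)^(k-i) = (-1)^(k-i) * (t^i * t^(k-i))"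
          unfolding power_minus[of t] by (rule mult.left_commute)
        also have "t^i * t^(k-i) = t^k"
        proof -
          have ik: "i + (k - i) = k" using that by simp
          show ?thesis using power_add[of t i "k - i"] unfolding ik by simp
        qed
        also have "(-1::real)^(k-i) = (-1)^(k+i)"
        proof -
          have ki: "k + i = (k - i) + 2 * i" using that by simp
          have "(-1::real)^(k+i) = (-1)^(k-i) * ((-1)^2)^i" unfolding ki power_add power_mult ..
          thus ?thesis by simp
        qed
        finally show ?thesis .
      qed
      have "a i * b (k - i) = (t^i * (-t)^(k-i)) / (fact i * fact (k - i)) * mat_pow P i x y"
        unfolding a_def b_def by simp
      also have "\<dots> = (-1)^(k+i) * t^k / (fact i * fact (k - i)) * mat_pow P i x y" unfolding pw by simp
      also have "\<dots> = t^k / fact k * (real (k choose i) * (-1)^(k+i) * mat_pow P i x y)"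
        using binomial_fact[OF that, where 'a=real] by (simp add: field_simps)
      finally show ?thesis .
    qed
    hence "(\<Sum>i\<le>k. a i * b (k - i)) = (\<Sum>i\<le>k. t^k / fact k * (real (k choose i) * (-1)^(k+i) * mat_pow P i x y))"
      by (intro sum.cong) auto
    also have "\<dots> = t^k / fact k * mat_pow (gen_matrix P) k x y"
      unfolding genpow by (simp add: sum_distrib_left)
    finally show "(\<Sum>i\<le>k. a i * b (k - i)) = t^k / fact k * mat_pow (gen_matrix P) k x y" .
  qed
  finally have "suminf a * exp (-t) = (\<Sum>k. t^k / fact k * mat_pow (gen_matrix P) k x y)" unfolding eb .
  thus ?thesis unfolding exp_gen_def Hs_def a_def[symmetric] by (simp add: mult.commute)
qed



lemma Hs_nonneg:
  assumes st: "stochastic P" and t: "t \<ge> 0"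
  shows "Hs P t x y \<ge> 0"
  unfolding Hs_def
  using stoch_pow[OF st] t unfolding stochastic_def
  by (intro suminf_nonneg summable_norm_cancel[OF Hs_summable[OF st]]) auto

lemma Hs_rowsum:
  assumes st: "stochastic P"
  shows "(\<Sum>y\<in>UNIV. Hs P t x y) = exp t"
proof -
  have "(\<lambda>j. \<Sum>y\<in>UNIV. t^j / fact j * mat_pow P j x y) sums (\<Sum>y\<in>UNIV. Hs P t x y)"
    by (intro sums_sum Hs_sums[OF st])
  moreover have "(\<lambda>j. \<Sum>y\<in>UNIV. t^j / fact j * mat_pow P j x y) = (\<lambda>j. t^j / fact j)"
  proof (rule ext)
    fix j
    have "(\<Sum>y\<in>UNIV. t^j / fact j * mat_pow P j x y) = t^j / fact j * (\<Sum>y\<in>UNIV. mat_pow P j x y)"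
      by (rule sum_distrib_left[symmetric])
    also have "\<dots> = t^j / fact j" using stoch_pow[OF st, of j] unfolding stochastic_def by simp
    finally show "(\<Sum>y\<in>UNIV. t^j / fact j * mat_pow P j x y) = t^j / fact j" .
  qed
  ultimately show ?thesis using exp_sums'[of t] sums_unique2 by metis
qed

lemma H_nonneg:
  assumes "stochastic P" "t \<ge> 0" shows "exp_gen P t x y \<ge> 0"
  unfolding exp_rep[OF assms(1)] using Hs_nonneg[OF assms] by simp

lemma H_rowsum:
  assumes "stochastic P" shows "(\<Sum>y\<in>UNIV. exp_gen P t x y) = 1"
proof -
  have "(\<Sum>y\<in>UNIV. exp (-t) * Hs P t x y) = exp (-t) * (\<Sum>y\<in>UNIV. Hs P t x y)"
    by (rule sum_distrib_left[symmetric])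
  also have "\<dots> = 1" unfolding Hs_rowsum[OF assms] by (simp add: exp_minus)
  finally show ?thesis unfolding exp_rep[OF assms(1)] .
qed

lemma H_diag:
  assumes st: "stochastic P" and t: "t \<ge> 0" shows "exp_gen P t x x \<ge> exp (-t)"
proof -
  have "sum (\<lambda>j. t^j / fact j * mat_pow P j x x) {0} \<le> Hs P t x x"
    unfolding Hs_def using stoch_pow[OF st] t unfolding stochastic_def
    by (intro sum_le_suminf summable_norm_cancel[OF Hs_summable[OF st]]) auto
  hence "1 \<le> Hs P t x x" by (simp add: mat_id_def)
  thus ?thesis unfolding exp_rep[OF st] by simp
qed

lemma fact_ratio: "t^(Suc j) / fact (Suc j) * real (Suc j) = t * (t^j / fact j :: real)"
proof -
  have "t^(Suc j) / fact (Suc j) * real (Suc j) = t^(Suc j) * (real (Suc j) / fact (Suc j))" by simp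
  also have "real (Suc j) / fact (Suc j) = (1::real) / fact j"
    by (simp only: fact_Suc) (simp del: of_nat_Suc)
  finally show ?thesis by simp
qed

lemma sums_j: "(\<lambda>j. t^j / fact j * real j) sums (t * exp t)"
proof -
  have "(\<lambda>j. t * (t^j / fact j)) sums (t * exp t)" by (intro sums_mult exp_sums')
  moreover have "(\<lambda>j. t^(Suc j) / fact (Suc j) * real (Suc j)) = (\<lambda>j. t * (t^j / fact j))"
    by (rule ext) (rule fact_ratio)
  ultimately have "(\<lambda>j. t^(Suc j) / fact (Suc j) * real (Suc j)) sums (t * exp t)" by simp
  thus ?thesis by (subst (asm) sums_Suc_iff) simp
qed

lemma sums_j2: "(\<lambda>j. t^j / fact j * (real j)^2) sums (exp t * (t^2 + t))"
proof -
  have "(\<lambda>j. t * (t^j / fact j * real j) + t * (t^j / fact j)) sums (t * (t * exp t) + t * exp t)"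
    by (intro sums_add sums_mult exp_sums' sums_j)
  moreover have "(\<lambda>j. t^(Suc j) / fact (Suc j) * (real (Suc j))^2) = (\<lambda>j. t * (t^j / fact j * real j) + t * (t^j / fact j))"
  proof (rule ext)
    fix j
    have "t^(Suc j) / fact (Suc j) * (real (Suc j))^2 = (t^(Suc j) / fact (Suc j) * real (Suc j)) * real (Suc j)"
      by (simp add: power2_eq_square)
    also have "\<dots> = t * (t^j / fact j) * (real j + 1)" unfolding fact_ratio by simp
    also have "\<dots> = t * (t^j / fact j * real j) + t * (t^j / fact j)"
      by (simp add: algebra_simps add_divide_distrib)
    finally show "t^(Suc j) / fact (Suc j) * (real (Suc j))^2 = t * (t^j / fact j * real j) + t * (t^j / fact j)" .
  qed
  ultimately have "(\<lambda>j. t^(Suc j) / fact (Suc j) * (real (Suc j))^2) sums (exp t * (t^2 + t))"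
    by (simp add: algebra_simps power2_eq_square)
  thus ?thesis by (subst (asm) sums_Suc_iff) simp
qed

lemma DD_H:
  assumes st: "stochastic P" and stat: "stationary P \<pi>" and t: "t \<ge> 0"
  shows "DD (exp_gen P t) \<pi> g \<le> (t^2 + t) * DD P \<pi> g"
proof -
  have pi0: "\<pi> x \<ge> 0" for x using stat unfolding stationary_def by auto
  have s1: "(\<lambda>j. \<Sum>x\<in>UNIV. \<Sum>y\<in>UNIV. \<pi> x * (g y - g x)^2 * (t^j / fact j * mat_pow P j x y))
      sums (\<Sum>x\<in>UNIV. \<Sum>y\<in>UNIV. \<pi> x * (g y - g x)^2 * Hs P t x y)"
    by (intro sums_sum sums_mult Hs_sums[OF st])
  have eqj: "(\<Sum>x\<in>UNIV. \<Sum>y\<in>UNIV. \<pi> x * (g y - g x)^2 * (t^j / fact j * mat_pow P j x y))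
     = t^j / fact j * DD (mat_pow P j) \<pi> g" for j
    unfolding DD_def by (simp add: sum_distrib_left mult_ac)
  have s2: "(\<lambda>j. t^j / fact j * (real j)^2 * DD P \<pi> g) sums (exp t * (t^2 + t) * DD P \<pi> g)"
    by (intro sums_mult2 sums_j2)
  have "(\<Sum>x\<in>UNIV. \<Sum>y\<in>UNIV. \<pi> x * (g y - g x)^2 * Hs P t x y) \<le> exp t * (t^2 + t) * DD P \<pi> g"
  proof (rule sums_le[OF _ s1 s2])
    fix j
    have "t^j / fact j * DD (mat_pow P j) \<pi> g \<le> t^j / fact j * ((real j)^2 * DD P \<pi> g)"
      using t by (intro mult_left_mono DD_pow[OF st stat]) auto
    thus "(\<Sum>x\<in>UNIV. \<Sum>y\<in>UNIV. \<pi> x * (g y - g x)^2 * (t^j / fact j * mat_pow P j x y))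
        \<le> t^j / fact j * (real j)^2 * DD P \<pi> g" unfolding eqj by (simp add: mult_ac)
  qed
  moreover have "DD (exp_gen P t) \<pi> g = exp (-t) * (\<Sum>x\<in>UNIV. \<Sum>y\<in>UNIV. \<pi> x * (g y - g x)^2 * Hs P t x y)"
    unfolding DD_def exp_rep[OF st] by (simp add: sum_distrib_left mult_ac)
  ultimately have "DD (exp_gen P t) \<pi> g \<le> exp (-t) * (exp t * (t^2 + t) * DD P \<pi> g)"
    by (simp add: mult_left_mono)
  also have "\<dots> = (exp (-t) * exp t) * ((t^2 + t) * DD P \<pi> g)" by (simp only: mult_ac)
  also have "exp (-t) * exp t = 1" by (simp add: exp_minus)
  finally show ?thesis by simp
qed



lemma cconverge:
  assumes erg: "ergodic P" and stat: "stationary P \<pi>" and e: "\<epsilon> > 0"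
  shows "\<exists>T. \<forall>t\<ge>T. \<forall>x. var_dist (exp_gen P t x) \<pi> \<le> \<epsilon>"
proof -
  have st: "stochastic P" using erg unfolding ergodic_def by auto
  have pi0: "\<pi> y \<ge> 0" for y using stat unfolding stationary_def by auto
  obtain J where J: "\<And>j x. j \<ge> J \<Longrightarrow> var_dist (mat_pow P j x) \<pi> \<le> \<epsilon>/2"
    using converge[OF erg stat, of "\<epsilon>/2"] e by auto
  define a where "a j x = (\<Sum>y\<in>UNIV. \<bar>mat_pow P j x y - \<pi> y\<bar>)" for j x
  have a2: "a j x \<le> 2" for j x
  proof -
    have "a j x \<le> (\<Sum>y\<in>UNIV. mat_pow P j x y + \<pi> y)"
      unfolding a_def
    proof (intro sum_mono)
      fix y
      have "0 \<le> mat_pow P j x y" using stoch_pow[OF st, of j] unfolding stochastic_def by auto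
      thus "\<bar>mat_pow P j x y - \<pi> y\<bar> \<le> mat_pow P j x y + \<pi> y" using pi0[of y] by linarith
    qed
    also have "\<dots> = 2" using stoch_pow[OF st, of j] stat unfolding stochastic_def stationary_def
      by (simp add: sum.distrib)
    finally show ?thesis .
  qed
  have aJ: "a j x \<le> (if j < J then 2 else 0) + \<epsilon>" for j x
  proof (cases "j < J")
    case True thus ?thesis using a2[of j x] e by simp
  next
    case False
    hence "var_dist (mat_pow P j x) \<pi> \<le> \<epsilon>/2" using J by simp
    thus ?thesis using False unfolding var_dist_def a_def by simp
  qed
  have lim: "((\<lambda>t::real. \<Sum>j<J. t^j / exp t / fact j) \<longlongrightarrow> 0) at_top"
    by (intro tendsto_null_sum tendsto_divide_zero tendsto_power_div_exp_0)
  have "eventually (\<lambda>t. (\<Sum>j<J. t^j / exp t / fact j) < \<epsilon>/4) at_top"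
    using order_tendstoD(2)[OF lim, of "\<epsilon>/4"] e by simp
  then obtain T where T: "\<And>t. t \<ge> T \<Longrightarrow> (\<Sum>j<J. t^j / exp t / fact j) < \<epsilon>/4"
    unfolding eventually_at_top_linorder by blast
  have "var_dist (exp_gen P t x) \<pi> \<le> \<epsilon>" if t: "t \<ge> max T 0" for t x
  proof -
    define w where "w j = t^j / fact j" for j :: nat
    define S where "S y = Hs P t x y - exp t * \<pi> y" for y
    have Ssum: "(\<lambda>j. w j * (mat_pow P j x y - \<pi> y)) sums S y" for y
    proof -
      have "(\<lambda>j. w j * mat_pow P j x y - w j * \<pi> y) sums (Hs P t x y - exp t * \<pi> y)"
        unfolding w_def by (intro sums_diff Hs_sums[OF st] sums_mult2 exp_sums')
      thus ?thesis unfolding S_def by (simp add: right_diff_distrib)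
    qed
    have w0: "w j \<ge> 0" for j unfolding w_def using t by simp
    have s1: "(\<lambda>j. \<Sum>y\<in>UNIV. sgn (S y) * (w j * (mat_pow P j x y - \<pi> y))) sums (\<Sum>y\<in>UNIV. sgn (S y) * S y)"
      by (intro sums_sum sums_mult Ssum)
    have s2: "(\<lambda>j. w j * (if j < J then 2 else 0) + \<epsilon> * w j) sums ((\<Sum>j<J. w j * 2) + \<epsilon> * exp t)"
    proof (intro sums_add sums_mult)
      show "(\<lambda>j. w j * (if j < J then 2 else 0)) sums (\<Sum>j<J. w j * 2)"
        using sums_finite[of "{..<J}" "\<lambda>j. w j * (if j < J then 2 else 0)"] by simp
      show "w sums exp t" unfolding w_def by (rule exp_sums')
    qed
    have "(\<Sum>y\<in>UNIV. sgn (S y) * S y) \<le> (\<Sum>j<J. w j * 2) + \<epsilon> * exp t"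
    proof (rule sums_le[OF _ s1 s2])
      fix j
      have "(\<Sum>y\<in>UNIV. sgn (S y) * (w j * (mat_pow P j x y - \<pi> y))) \<le> (\<Sum>y\<in>UNIV. w j * \<bar>mat_pow P j x y - \<pi> y\<bar>)"
      proof (rule sum_mono)
        fix y
        have "sgn (S y) * (w j * (mat_pow P j x y - \<pi> y)) \<le> \<bar>sgn (S y) * (w j * (mat_pow P j x y - \<pi> y))\<bar>"
          by (rule abs_ge_self)
        also have "\<dots> = \<bar>sgn (S y)\<bar> * (w j * \<bar>mat_pow P j x y - \<pi> y\<bar>)"
          using w0[of j] by (simp add: abs_mult)
        also have "\<dots> \<le> 1 * (w j * \<bar>mat_pow P j x y - \<pi> y\<bar>)"
          using w0[of j] by (intro mult_right_mono) (auto simp: abs_sgn_eq)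
        finally show "sgn (S y) * (w j * (mat_pow P j x y - \<pi> y)) \<le> w j * \<bar>mat_pow P j x y - \<pi> y\<bar>" by simp
      qed
      also have "\<dots> = w j * a j x" unfolding a_def by (simp add: sum_distrib_left)
      also have "\<dots> \<le> w j * ((if j < J then 2 else 0) + \<epsilon>)" using w0[of j] aJ by (intro mult_left_mono) auto
      finally show "(\<Sum>y\<in>UNIV. sgn (S y) * (w j * (mat_pow P j x y - \<pi> y))) \<le> w j * (if j < J then 2 else 0) + \<epsilon> * w j"
        by (simp add: algebra_simps)
    qed
    moreover have "(\<Sum>y\<in>UNIV. sgn (S y) * S y) = (\<Sum>y\<in>UNIV. \<bar>S y\<bar>)"
      by (intro sum.cong refl) (simp add: abs_sgn mult.commute)
    moreover have "(\<Sum>j<J. w j * 2) = 2 * (\<Sum>j<J. w j)" unfolding sum_distrib_left by (simp add: mult.commute)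
    ultimately have b1: "(\<Sum>y\<in>UNIV. \<bar>S y\<bar>) \<le> 2 * (\<Sum>j<J. w j) + \<epsilon> * exp t"
      by linarith
    have "(\<Sum>y\<in>UNIV. \<bar>exp_gen P t x y - \<pi> y\<bar>) = exp (-t) * (\<Sum>y\<in>UNIV. \<bar>S y\<bar>)"
    proof -
      have "\<bar>exp_gen P t x y - \<pi> y\<bar> = exp (-t) * \<bar>S y\<bar>" for y
      proof -
        have "exp_gen P t x y - \<pi> y = exp (-t) * S y"
          unfolding exp_rep[OF st] S_def by (simp add: right_diff_distrib exp_minus field_simps)
        thus ?thesis by (simp add: abs_mult)
      qed
      thus ?thesis by (simp add: sum_distrib_left)
    qed
    also have "\<dots> \<le> exp (-t) * (2 * (\<Sum>j<J. w j) + \<epsilon> * exp t)"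
      using b1 by (intro mult_left_mono) auto
    also have "\<dots> = 2 * (\<Sum>j<J. t^j / exp t / fact j) + \<epsilon>"
      unfolding w_def by (simp add: sum_distrib_left exp_minus field_simps)
    also have "\<dots> \<le> 2 * (\<epsilon>/4) + \<epsilon>" using T[of t] t by simp
    finally have "(\<Sum>y\<in>UNIV. \<bar>exp_gen P t x y - \<pi> y\<bar>) \<le> 2 * (\<epsilon>/4) + \<epsilon>" .
    thus ?thesis unfolding var_dist_def using e by linarith
  qed
  thus ?thesis by blast
qed



lemma fin_ineq1:
  fixes a :: real and n :: nat
  assumes a0: "0 < a" and a1: "a \<le> 1" and n: "n > 0"
  shows "a^2 / (8 * (real n)^2) \<le> a / (2 * (real n)^2)"
proof -
  have "a^2 \<le> 4 * a" using a0 a1 by (simp add: power2_eq_square)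
  thus ?thesis using n by (simp add: divide_simps)
qed

lemma fin_ineq2:
  fixes a \<tau> :: real
  assumes a0: "0 < a" and a1: "a \<le> 1/3" and t: "\<tau> \<ge> 1/4"
  shows "a^2 / (8 * \<tau>^2) \<le> a / (2 * ((2 * \<tau>)^2 + 2 * \<tau>))"
proof -
  have tp: "\<tau> > 0" using t by simp
  have k0: "4 * \<tau> \<le> 16 * \<tau>^2" using t tp by (simp add: power2_eq_square)
  have "a * (8 * \<tau>^2 + 4 * \<tau>) \<le> (1/3) * (8 * \<tau>^2 + 4 * \<tau>)"
    using a1 tp by (intro mult_right_mono) auto
  moreover have "(1/3) * (8 * \<tau>^2 + 4 * \<tau>) \<le> 8 * \<tau>^2" using k0 by (simp add: algebra_simps)
  ultimately have k: "a * (8 * \<tau>^2 + 4 * \<tau>) \<le> 8 * \<tau>^2" by linarith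
  have "a * (a * (8 * \<tau>^2 + 4 * \<tau>)) \<le> a * (8 * \<tau>^2)" using mult_left_mono[OF k] a0 by simp
  hence key: "a^2 * (8 * \<tau>^2 + 4 * \<tau>) \<le> a * (8 * \<tau>^2)" by (simp add: power2_eq_square mult.assoc)
  have Dp: "8 * \<tau>^2 + 4 * \<tau> > 0" using tp by (simp add: add_pos_pos)
  have Tp: "8 * \<tau>^2 > 0" using tp by simp
  have D: "2 * ((2 * \<tau>)^2 + 2 * \<tau>) = 8 * \<tau>^2 + 4 * \<tau>" by (simp add: power2_eq_square algebra_simps)
  have "a^2 \<le> (a * (8 * \<tau>^2)) / (8 * \<tau>^2 + 4 * \<tau>)" using pos_le_divide_eq[OF Dp] key by simp
  also have "\<dots> = a / (8 * \<tau>^2 + 4 * \<tau>) * (8 * \<tau>^2)" by simp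
  finally have "a^2 / (8 * \<tau>^2) \<le> a / (8 * \<tau>^2 + 4 * \<tau>)" using pos_divide_le_eq[OF Tp] by simp
  thus ?thesis unfolding D .
qed


theorem corollary20:
  fixes P :: "'a::finite \<Rightarrow> 'a \<Rightarrow> real" and \<pi> :: "'a \<Rightarrow> real"
  assumes "ergodic P" and "stationary P \<pi>"
  shows "ereal ((1/2 - 1/(2 * exp 1))^2 / (8 * (real (mix_time P \<pi> (1/(2 * exp 1))))^2)) \<le> lambda1 P \<pi>
       \<and> ereal ((1/2 - 1/(2 * exp 1))^2 / (8 * (cmix_time P \<pi> (1/(2 * exp 1)))^2)) \<le> lambda1 P \<pi>"
proof -
  note erg = assms(1) and stat = assms(2)
  have st: "stochastic P" and irr: "irreducible_chain P" using erg unfolding ergodic_def by auto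
  have P0: "\<And>x y. P x y \<ge> 0" using st unfolding stochastic_def by auto
  have pi0: "\<And>x. \<pi> x \<ge> 0" and pi1: "(\<Sum>x\<in>UNIV. \<pi> x) = 1" using stat unfolding stationary_def by auto
  have piP: "\<pi> y > 0" for y
  proof -
    obtain x0 where x0: "\<pi> x0 > 0"
    proof (rule ccontr)
      assume "\<not> thesis"
      hence "\<forall>x. \<pi> x \<le> 0" using that by (meson not_le)
      hence "\<forall>x. \<pi> x = 0" using pi0 by (meson order.antisym)
      thus False using pi1 by simp
    qed
    obtain n where n: "mat_pow P n x0 y > 0" using irr unfolding irreducible_chain_def by blast
    have "\<pi> x0 * mat_pow P n x0 y \<le> (\<Sum>x\<in>UNIV. \<pi> x * mat_pow P n x y)"
      using pi0 stoch_pow[OF st, of n] unfolding stochastic_def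
      by (intro member_le_sum) auto
    also have "\<dots> = \<pi> y" by (rule stat_pow[OF stat])
    finally show ?thesis using x0 n by (smt (verit) mult_pos_pos)
  qed
  define \<epsilon> :: real where "\<epsilon> = 1/(2 * exp 1)"
  have e2: "exp (1::real) \<ge> 2" using exp_ge_add_one_self[of "1::real"] by simp
  have e3: "exp (1::real) \<le> 3" using exp_bound[of "1::real"] by simp
  have ep: "\<epsilon> > 0" unfolding \<epsilon>_def by simp
  have e14: "\<epsilon> \<le> 1/4" unfolding \<epsilon>_def using e2 by (simp add: divide_simps)
  have e16: "\<epsilon> \<ge> 1/6" unfolding \<epsilon>_def using e3 by (simp add: divide_simps)
  define a where "a = 1/2 - \<epsilon>"
  have a0: "a > 0" and a1: "a \<le> 1/3" unfolding a_def using e14 e16 by auto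
  define \<tau> where "\<tau> = mix_time P \<pi> \<epsilon>"
  have mix: "var_dist (mat_pow P \<tau> x) \<pi> \<le> \<epsilon> \<and> \<tau> > 0" for x
  proof -
    obtain T where T: "\<And>t x. t \<ge> T \<Longrightarrow> var_dist (mat_pow P t x) \<pi> \<le> \<epsilon>"
      using converge[OF erg stat ep] by blast
    define Q where "Q t = (t > 0 \<and> (\<forall>t'\<ge>t. var_dist (mat_pow P t' x) \<pi> \<le> \<epsilon>))" for t
    have "Q (Suc T)" unfolding Q_def using T by auto
    hence q: "Q (mix_time_from P \<pi> \<epsilon> x)" unfolding mix_time_from_def Q_def[symmetric] by (rule LeastI)
    have "mix_time_from P \<pi> \<epsilon> x \<le> \<tau>" unfolding \<tau>_def mix_time_def by simp
    thus ?thesis using q unfolding Q_def by auto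
  qed
  have \<tau>p: "\<tau> > 0" using mix by blast
  define c1 where "c1 = a / (2 * (real \<tau>)^2)"
  have L1: "ereal c1 \<le> lambda1 P \<pi>"
  proof (rule lambda_bound[OF P0 piP pi1])
    show "c1 \<ge> 0" unfolding c1_def using a0 by simp
    fix g :: "'a \<Rightarrow> real" assume g0: "\<And>x. g x \<ge> 0" and half: "(\<Sum>y\<in>{y. g y = 0}. \<pi> y) \<ge> 1/2"
    have "a * (\<Sum>x\<in>UNIV. \<pi> x * (g x)^2) \<le> DD (mat_pow P \<tau>) \<pi> g"
      unfolding a_def
      by (rule DD_lower[OF _ _ _ pi0 pi1 g0 half])
         (use stoch_pow[OF st, of \<tau>] mix in \<open>auto simp: stochastic_def\<close>)
    also have "\<dots> \<le> (real \<tau>)^2 * DD P \<pi> g" by (rule DD_pow[OF st stat])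
    also have "\<dots> = (real \<tau>)^2 * 2 * dirichlet P \<pi> g" unfolding DD_P by simp
    finally have "a * (\<Sum>x\<in>UNIV. \<pi> x * (g x)^2) \<le> (2 * (real \<tau>)^2) * dirichlet P \<pi> g" by (simp add: mult_ac)
    thus "c1 * (\<Sum>x\<in>UNIV. \<pi> x * (g x)^2) \<le> dirichlet P \<pi> g"
      unfolding c1_def using \<tau>p by (simp add: divide_simps mult_ac)
  qed
  have goal1: "ereal ((1/2 - 1/(2 * exp 1))^2 / (8 * (real (mix_time P \<pi> (1/(2 * exp 1))))^2)) \<le> lambda1 P \<pi>"
  proof -
    have "a^2 / (8 * (real \<tau>)^2) \<le> c1" unfolding c1_def using fin_ineq1[OF a0 _ \<tau>p] a1 by simp
    hence "ereal (a^2 / (8 * (real \<tau>)^2)) \<le> ereal c1" by simp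
    hence "ereal (a^2 / (8 * (real \<tau>)^2)) \<le> lambda1 P \<pi>" using L1 by (rule order.trans)
    thus ?thesis unfolding a_def \<tau>_def \<epsilon>_def .
  qed
  define \<sigma> where "\<sigma> = cmix_time P \<pi> \<epsilon>"
  have cfacts: "cmix_time_from P \<pi> \<epsilon> x \<ge> 0 \<and> (\<forall>t > \<sigma>. var_dist (exp_gen P t x) \<pi> \<le> \<epsilon>)" for x
  proof -
    obtain T where T: "\<And>t x. t \<ge> T \<Longrightarrow> var_dist (exp_gen P t x) \<pi> \<le> \<epsilon>"
      using cconverge[OF erg stat ep] by blast
    define S where "S = {t. t > 0 \<and> (\<forall>t'::real. t' \<ge> t \<longrightarrow> var_dist (exp_gen P t' x) \<pi> \<le> \<epsilon>)}"
    have "max T 1 \<in> S" unfolding S_def using T by auto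
    hence Sne: "S \<noteq> {}" by auto
    have bdd: "bdd_below S" unfolding S_def by (rule bdd_belowI[of _ 0]) auto
    have cdef: "cmix_time_from P \<pi> \<epsilon> x = Inf S" unfolding cmix_time_from_def S_def ..
    have c0: "Inf S \<ge> 0" using Sne unfolding S_def by (intro cInf_greatest) auto
    have cle: "cmix_time_from P \<pi> \<epsilon> x \<le> \<sigma>" unfolding \<sigma>_def cmix_time_def by simp
    have "var_dist (exp_gen P t x) \<pi> \<le> \<epsilon>" if "t > \<sigma>" for t
    proof -
      have "Inf S < t" using cle that cdef by simp
      then obtain s where "s \<in> S" "s < t" using cInf_less_iff[OF Sne bdd] by blast
      thus ?thesis unfolding S_def by auto
    qed
    thus ?thesis using c0 cdef by simp
  qed
  have goal2: "ereal ((1/2 - 1/(2 * exp 1))^2 / (8 * (cmix_time P \<pi> (1/(2 * exp 1)))^2)) \<le> lambda1 P \<pi>"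
  proof (cases "\<exists>x1 x2::'a. x1 \<noteq> x2")
    case False
    have "{\<phi>::'a \<Rightarrow> real. \<exists>x y. \<phi> x \<noteq> \<phi> y} = {}"
    proof (rule equals0I)
      fix \<phi> :: "'a \<Rightarrow> real" assume "\<phi> \<in> {\<phi>::'a \<Rightarrow> real. \<exists>x y. \<phi> x \<noteq> \<phi> y}"
      then obtain x y where "\<phi> x \<noteq> \<phi> y" by blast
      hence "x \<noteq> y" by auto
      with False show False by blast
    qed
    thus ?thesis unfolding lambda1_def by simp
  next
    case True
    then obtain x1 x2 :: 'a where x12: "x1 \<noteq> x2" by blast
    have "\<pi> x1 + \<pi> x2 \<le> 1"
    proof -
      have "(\<Sum>x\<in>{x1,x2}. \<pi> x) \<le> (\<Sum>x\<in>UNIV. \<pi> x)" using pi0 by (intro sum_mono2) auto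
      thus ?thesis using x12 pi1 by simp
    qed
    then obtain xh where xh: "\<pi> xh \<le> 1/2" by (metis field_sum_of_halves linorder_not_le add_strict_mono not_less)
    have "cmix_time_from P \<pi> \<epsilon> xh \<le> \<sigma>" unfolding \<sigma>_def cmix_time_def by simp
    hence \<sigma>0: "\<sigma> \<ge> 0" using cfacts[of xh] by linarith
    have \<sigma>q: "\<sigma> \<ge> 1/4"
    proof (rule ccontr)
      assume "\<not> \<sigma> \<ge> 1/4"
      define t where "t = (\<sigma> + 1/4) / 2"
      have t1: "\<sigma> < t" "t < 1/4" "t \<ge> 0" unfolding t_def using \<open>\<not> \<sigma> \<ge> 1/4\<close> \<sigma>0 by auto
      have vd: "var_dist (exp_gen P t xh) \<pi> \<le> \<epsilon>" using cfacts[of xh] t1 by auto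
      have "(\<Sum>y\<in>{xh}. \<pi> y) \<ge> (\<Sum>y\<in>{xh}. exp_gen P t xh y) - var_dist \<pi> (exp_gen P t xh)"
        by (rule tv_set[OF pi1 H_rowsum[OF st]])
      moreover have "var_dist \<pi> (exp_gen P t xh) = var_dist (exp_gen P t xh) \<pi>"
        unfolding var_dist_def by (simp add: abs_minus_commute)
      ultimately have "\<pi> xh \<ge> exp_gen P t xh xh - \<epsilon>" using vd by simp
      moreover have "exp_gen P t xh xh \<ge> exp (-t)" by (rule H_diag[OF st t1(3)])
      moreover have "exp (-t) > exp (-1/4)" using t1 by simp
      moreover have "exp (-1/4::real) \<ge> 3/4" using exp_ge_add_one_self[of "-1/4::real"] by simp
      ultimately show False using xh e14 by linarith
    qed
    define t where "t = 2 * \<sigma>"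
    have tp: "t > \<sigma>" "t \<ge> 0" unfolding t_def using \<sigma>q by auto
    have tpos: "t^2 + t > 0" using \<sigma>q unfolding t_def by (simp add: add_pos_pos)
    define c2 where "c2 = a / (2 * (t^2 + t))"
    have L2: "ereal c2 \<le> lambda1 P \<pi>"
    proof (rule lambda_bound[OF P0 piP pi1])
      show "c2 \<ge> 0" unfolding c2_def using a0 tpos by simp
      fix g :: "'a \<Rightarrow> real" assume g0: "\<And>x. g x \<ge> 0" and half: "(\<Sum>y\<in>{y. g y = 0}. \<pi> y) \<ge> 1/2"
      have "a * (\<Sum>x\<in>UNIV. \<pi> x * (g x)^2) \<le> DD (exp_gen P t) \<pi> g"
        unfolding a_def
        by (rule DD_lower[OF _ _ _ pi0 pi1 g0 half])
           (use H_nonneg[OF st tp(2)] H_rowsum[OF st] cfacts tp in auto)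
      also have "\<dots> \<le> (t^2 + t) * DD P \<pi> g" by (rule DD_H[OF st stat tp(2)])
      also have "\<dots> = (2 * (t^2 + t)) * dirichlet P \<pi> g" unfolding DD_P by simp
      finally have "a * (\<Sum>x\<in>UNIV. \<pi> x * (g x)^2) \<le> (2 * (t^2 + t)) * dirichlet P \<pi> g" .
      thus "c2 * (\<Sum>x\<in>UNIV. \<pi> x * (g x)^2) \<le> dirichlet P \<pi> g"
        unfolding c2_def using tpos by (simp add: divide_simps mult_ac)
    qed
    have "a^2 / (8 * \<sigma>^2) \<le> c2" unfolding c2_def t_def by (rule fin_ineq2[OF a0 a1 \<sigma>q])
    hence "ereal (a^2 / (8 * \<sigma>^2)) \<le> ereal c2" by simp
    hence "ereal (a^2 / (8 * \<sigma>^2)) \<le> lambda1 P \<pi>" using L2 by (rule order.trans)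
    thus ?thesis unfolding a_def \<sigma>_def \<epsilon>_def .
  qed
  show ?thesis using goal1 goal2 by blast
qed


end
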